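(* Let $a_c\in(\pi,\frac32\pi)$ be the smallest strictly positive solution of $\tan(x)=\tanh(x)$. For $a>0$ the inequality $$\cosh(a)\sin(a)\sinh(x)\cos(x)-\sinh(a)\cos(a)\cosh(x)\sin(x)>0$$ holds for all $x\in(0,a)$ if and only if $a\in(0,a_c]$. *)

theory Defs
  imports "HOL-Analysis.Analysis"
begin

definition a_c :: real where
  "a_c = Inf {x::real. x > 0 \<and> tan x = tanh x}"

end

theory Submission
  imports Defs
begin

definition hh :: "real \<Rightarrow> real" where
  "hh t = cosh t * sin t - sinh t * cos t"

definition qq :: "real \<Rightarrow> real" where
  "qq t = sin t / sinh t"

lemma hh_deriv: "(hh has_real_derivative (2 * sinh t * sin t)) (at t)"
  unfolding hh_def[abs_def] by (auto intro!: derivative_eq_intros simp: algebra_simps)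

lemma hh_cont: "continuous_on S hh"
  unfolding hh_def[abs_def] by (intro continuous_intros)

lemma qq_deriv:
  assumes "t > 0"
  shows "(qq has_real_derivative (- hh t / (sinh t)^2)) (at t)"
proof -
  have "sinh t \<noteq> 0" using assms sinh_real_pos_iff[of t] by auto
  then show ?thesis
    unfolding qq_def[abs_def] hh_def
    by (auto intro!: derivative_eq_intros simp: field_simps power2_eq_square)
qed

lemma qq_cont: "continuous_on {a..b} qq" if "a > 0" for a b :: real
proof -
  have "\<forall>t\<in>{a..b}. sinh t \<noteq> 0" using that sinh_real_pos_iff by force
  then show ?thesis unfolding qq_def[abs_def] by (intro continuous_intros) auto
qed

lemma hh_pos_0pi: assumes "0 < t" "t \<le> pi" shows "hh t > 0"
proof -
  have "hh 0 < hh t"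
  proof (rule DERIV_pos_imp_increasing_open[OF assms(1)])
    fix x assume "0 < x" "x < t"
    then have "sinh x > 0" "sin x > 0" using assms sinh_real_pos_iff[of x] sin_gt_zero[of x] by auto
    then have "2 * sinh x * sin x > 0" by simp
    then show "\<exists>y. (hh has_real_derivative y) (at x) \<and> 0 < y"
      using hh_deriv by blast
  qed (rule hh_cont)
  then show ?thesis by (simp add: hh_def)
qed

lemma hh_dec: assumes "pi \<le> s" "s < t" "t \<le> 2*pi" shows "hh t < hh s"
proof (rule DERIV_neg_imp_decreasing_open[OF assms(2)])
  fix x assume "s < x" "x < t"
  then have "sinh x > 0" "sin x < 0" using assms sinh_real_pos_iff[of x] pi_gt_zero
    sin_lt_zero[of x] by auto
  then have "2 * sinh x * sin x < 0" by (simp add: mult_pos_neg)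
  then show "\<exists>y. (hh has_real_derivative y) (at x) \<and> y < 0"
    using hh_deriv by blast
qed (rule hh_cont)

lemma qq_dec: assumes "0 < s" "s < t" "\<And>x. s < x \<Longrightarrow> x < t \<Longrightarrow> hh x > 0"
  shows "qq t < qq s"
proof (rule DERIV_neg_imp_decreasing_open[OF assms(2)])
  fix x assume "s < x" "x < t"
  then have "sinh x > 0" "hh x > 0" using assms sinh_real_pos_iff[of x] by auto
  then have "- hh x / (sinh x)^2 < 0" by simp
  moreover have "(qq has_real_derivative (- hh x / (sinh x)^2)) (at x)"
    using qq_deriv[of x] \<open>s < x\<close> assms(1) by simp
  ultimately show "\<exists>y. (qq has_real_derivative y) (at x) \<and> y < 0" by blast
qed (rule qq_cont[OF assms(1)])

lemma qq_inc: assumes "0 < s" "s < t" "\<And>x. s < x \<Longrightarrow> x < t \<Longrightarrow> hh x < 0"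
  shows "qq s < qq t"
proof (rule DERIV_pos_imp_increasing_open[OF assms(2)])
  fix x assume "s < x" "x < t"
  then have "sinh x > 0" "hh x < 0" using assms sinh_real_pos_iff[of x] by auto
  then have "0 < - hh x / (sinh x)^2" by (simp add: divide_neg_pos)
  moreover have "(qq has_real_derivative (- hh x / (sinh x)^2)) (at x)"
    using qq_deriv[of x] \<open>s < x\<close> assms(1) by simp
  ultimately show "\<exists>y. (qq has_real_derivative y) (at x) \<and> 0 < y" by blast
qed (rule qq_cont[OF assms(1)])

lemma F_ident:
  fixes a x :: real
  shows "cosh a * sin a * sinh x * cos x - sinh a * cos a * cosh x * sin x
   = (sinh (a+x) * sin (a-x) - sinh (a-x) * sin (a+x)) / 2"
  by (simp add: sinh_add sinh_diff sin_add sin_diff algebra_simps)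

lemma F_qq:
  assumes "0 < x" "x < a"
  shows "(cosh a * sin a * sinh x * cos x - sinh a * cos a * cosh x * sin x > 0)
     \<longleftrightarrow> qq (a+x) < qq (a-x)"
proof -
  have p1: "sinh (a+x) > 0" "sinh (a-x) > 0" using assms sinh_real_pos_iff by auto
  have "qq (a+x) < qq (a-x) \<longleftrightarrow> sin (a+x) * sinh (a-x) < sin (a-x) * sinh (a+x)"
    unfolding qq_def using p1 by (simp add: divide_simps)
  then show ?thesis unfolding F_ident by (auto simp: algebra_simps)
qed

lemma tan_eq_iff: assumes "x > 0" shows "tan x = tanh x \<longleftrightarrow> hh x = 0"
proof (cases "cos x = 0")
  case True
  then have "sin x \<noteq> 0" using sin_cos_squared_add[of x] by auto
  moreover have "tanh x \<noteq> 0" using assms sinh_real_pos_iff[of x] cosh_real_pos[of x]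
    by (simp add: tanh_def)
  ultimately show ?thesis using True cosh_real_pos[of x] by (simp add: tan_def hh_def)
next
  case False
  then show ?thesis using cosh_real_pos[of x]
    by (simp add: tan_def tanh_def hh_def divide_simps algebra_simps)
qed

theorem lemmaC6:
  shows "a_c \<in> {pi<..<3/2*pi} \<and> tan a_c = tanh a_c \<and>
    (\<forall>a::real. a > 0 \<longrightarrow>
      ((\<forall>x\<in>{0<..<a}. cosh a * sin a * sinh x * cos x - sinh a * cos a * cosh x * sin x > 0)
        \<longleftrightarrow> a \<le> a_c))"
proof -
  have hpi: "hh pi > 0" using hh_pos_0pi by simp
  have h32: "hh (3/2*pi) < 0"
  proof -
    have "sin (3/2*pi) = -1" "cos (3/2*pi) = 0"
      using sin_periodic_pi[of "pi/2"] cos_periodic_pi[of "pi/2"]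
      by (simp_all add: algebra_simps)
    then show ?thesis using cosh_real_pos[of "3/2*pi"] by (simp add: hh_def)
  qed
  obtain c where c: "pi \<le> c" "c \<le> 3/2*pi" "hh c = 0"
    using IVT2'[of hh "3/2*pi" 0 pi] hpi h32 hh_cont by force
  have "c \<noteq> pi" "c \<noteq> 3/2*pi" using c(3) hpi h32 by (metis less_irrefl)+
  then have c2: "pi < c" "c < 3/2*pi" using c by auto
  have hpos: "hh t > 0" if "0 < t" "t < c" for t
  proof (cases "t \<le> pi")
    case True then show ?thesis using hh_pos_0pi that by auto
  next
    case False then show ?thesis using hh_dec[of t c] that c c2 by auto
  qed
  have hneg: "hh t < 0" if "c < t" "t \<le> 2*pi" for t
    using hh_dec[of c t] that c by auto
  let ?S = "{x::real. x > 0 \<and> tan x = tanh x}"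
  have cS: "c \<in> ?S" using c c2 tan_eq_iff[of c] by auto
  have "a_c = c" unfolding a_c_def
  proof (rule cInf_eq_minimum[OF cS])
    fix x assume "x \<in> ?S"
    then have "x > 0" "hh x = 0" using tan_eq_iff by auto
    then show "c \<le> x" using hpos[of x] by force
  qed
  note ac = this
  have key: "qq (c+y) < qq (c-y)" if "0 < y" "y < c" for y
  proof -
    have K: "cosh c * sin c = sinh c * cos c" using c(3) by (simp add: hh_def)
    have "sin c < 0" using sin_lt_zero[of c] c2 by auto
    then have Kn: "cosh c * sin c < 0" using cosh_real_pos[of c] mult_pos_neg by blast
    have "cosh c * sin c * sinh y * cos y - sinh c * cos c * cosh y * sin y
        = - (cosh c * sin c) * hh y"
      using K by (simp add: hh_def algebra_simps)
    also have "\<dots> > 0" using Kn hpos[OF that] by (simp add: mult_neg_pos)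
    finally show ?thesis using F_qq[OF that] by blast
  qed
  have fwd: "cosh a * sin a * sinh x * cos x - sinh a * cos a * cosh x * sin x > 0"
    if "0 < x" "x < a" "a \<le> c" for a x
  proof -
    have "qq (a+x) < qq (a-x)"
    proof (cases "a + x \<le> c")
      case True
      show ?thesis by (rule qq_dec) (use that True hpos in auto)
    next
      case False
      define y where "y = a + x - c"
      have y: "0 < y" "y < c" "a - x \<le> c - y" using False that by (auto simp: y_def)
      have 1: "qq (c+y) < qq (c-y)" using key y by auto
      have 2: "qq (c-y) \<le> qq (a-x)"
      proof (cases "a - x = c - y")
        case False
        then have "qq (c-y) < qq (a-x)"
          by (intro qq_dec) (use that y hpos in auto)
        then show ?thesis by simp
      qed simp
      show ?thesis using 1 2 by (simp add: y_def)
    qed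
    then show ?thesis using F_qq that by auto
  qed
  have bwd: "\<exists>x\<in>{0<..<a}. \<not> (cosh a * sin a * sinh x * cos x - sinh a * cos a * cosh x * sin x > 0)"
    if "c < a" for a
  proof (cases "a < 2*pi")
    case True
    define m where "m = min (a - c) (2*pi - a)"
    define x where "x = m / 2"
    have m: "m \<le> a - c" "m \<le> 2*pi - a" "m > 0" using True that by (auto simp: m_def)
    have x1: "0 < x" unfolding x_def using m by linarith
    have x2: "x < a" unfolding x_def using m c2 that pi_gt_zero by linarith
    have x3: "c < a - x" unfolding x_def using m c2 that pi_gt_zero by linarith
    have x4: "a + x < 2*pi" unfolding x_def using m c2 that pi_gt_zero by linarith
    note x = x1 x2 x3 x4
    have "qq (a-x) < qq (a+x)"
    proof (rule qq_inc)
      show "0 < a - x" "a - x < a + x" using x by linarith+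
      fix y assume "a - x < y" "y < a + x"
      then show "hh y < 0" using hneg[of y] x by linarith
    qed
    then show ?thesis using F_qq[of x a] x by auto
  next
    case False
    show ?thesis
    proof (cases "cosh a * sin a \<ge> 0")
      case True
      have "0 < pi" "pi < a" using False pi_gt_zero by linarith+
      then have "pi \<in> {0<..<a}" by simp
      moreover have "\<not> (cosh a * sin a * sinh pi * cos pi - sinh a * cos a * cosh pi * sin pi > 0)"
      proof -
        have "sinh pi > 0" using sinh_real_pos_iff[of pi] pi_gt_zero by simp
        then have "0 \<le> cosh a * sin a * sinh pi" using True by simp
        then show ?thesis by simp
      qed
      ultimately show ?thesis by blast
    next
      case Fa: False
      have "a \<noteq> 2*pi" using Fa by auto
      then have "0 < 2*pi" "2*pi < a" using False pi_gt_zero by (linarith, simp)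
      then have "2*pi \<in> {0<..<a}" by simp
      moreover have "\<not> (cosh a * sin a * sinh (2*pi) * cos (2*pi) - sinh a * cos a * cosh (2*pi) * sin (2*pi) > 0)"
      proof -
        have "sinh (2*pi) > 0" using sinh_real_pos_iff[of "2*pi"] pi_gt_zero by simp
        then have "cosh a * sin a * sinh (2*pi) < 0" using Fa by (simp add: mult_neg_pos)
        then show ?thesis by simp
      qed
      ultimately show ?thesis by blast
    qed
  qed
  show ?thesis
  proof (intro conjI allI impI)
    show "a_c \<in> {pi<..<3/2*pi}" using ac c2 by simp
    show "tan a_c = tanh a_c" using ac cS by simp
  next
    fix a :: real assume "a > 0"
    show "(\<forall>x\<in>{0<..<a}. cosh a * sin a * sinh x * cos x - sinh a * cos a * cosh x * sin x > 0)
        \<longleftrightarrow> a \<le> a_c"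
    proof
      assume H: "\<forall>x\<in>{0<..<a}. cosh a * sin a * sinh x * cos x - sinh a * cos a * cosh x * sin x > 0"
      show "a \<le> a_c"
      proof (rule ccontr)
        assume "\<not> a \<le> a_c"
        then have "c < a" using ac by simp
        then show False using bwd[of a] H by blast
      qed
    next
      assume "a \<le> a_c"
      then show "\<forall>x\<in>{0<..<a}. cosh a * sin a * sinh x * cos x - sinh a * cos a * cosh x * sin x > 0"
        using fwd[of _ a] ac by auto
    qed
  qed
qed

end
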